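(* Let $r>2.2$ be real and let $p,q$ be primes with $p>q^2$. Then $\sigma_{-r}(qp)<\sigma_{-r}(q^2)$.
   Context: For $n\in\mathbb{N}$ and real $r$, $\sigma_{-r}(n)=\sum_{d\mid n}d^{-r}$. *)

theory Defs
  imports Complex_Main "HOL-Computational_Algebra.Primes"
begin

definition sigma_neg :: "real \<Rightarrow> nat \<Rightarrow> real" where
  "sigma_neg r n = (\<Sum>d\<in>{d. d dvd n}. real d powr (- r))"

end

theory Submission
  imports Defs
begin

lemma div_qp:
  fixes p q :: nat
  assumes "prime p" "prime q" "p \<noteq> q"
  shows "{d. d dvd q * p} = {1, q, p, q * p}"
proof
  show "{d. d dvd q * p} \<subseteq> {1, q, p, q * p}"
  proof
    fix d assume "d \<in> {d. d dvd q * p}"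
    then have "d dvd q * p" by simp
    then obtain a b where ab: "d = a * b" "a dvd q" "b dvd p"
      using division_decomp by blast
    have "a = 1 \<or> a = q" using ab(2) assms(2) by (simp add: prime_nat_iff)
    moreover have "b = 1 \<or> b = p" using ab(3) assms(1) by (simp add: prime_nat_iff)
    ultimately show "d \<in> {1, q, p, q * p}" using ab(1) by auto
  qed
qed auto

lemma div_q2:
  fixes q :: nat
  assumes "prime q"
  shows "{d. d dvd q^2} = {1, q, q^2}"
proof
  show "{d. d dvd q^2} \<subseteq> {1, q, q^2}"
  proof
    fix d assume "d \<in> {d. d dvd q^2}"
    then obtain i where "i \<le> 2" "d = q ^ i"
      using divides_primepow_nat[OF assms] by auto
    then show "d \<in> {1, q, q^2}"
      by (cases i; cases "i - 1"; auto simp: power2_eq_square)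
  qed
qed auto

lemma sq_powr:
  fixes Q s :: real
  assumes "Q \<ge> 0"
  shows "(Q^2) powr s = (Q powr s)^2"
  using assms by (simp add: power2_eq_square powr_mult)

lemma key:
  fixes Q P r :: real
  assumes Q: "Q \<ge> 2" and P: "P \<ge> Q^2 + 1" and r: "r > 2"
  shows "P powr (-r) + (Q*P) powr (-r) < (Q^2) powr (-r)"
proof -
  define s where "s = r - 2"
  have s: "s > 0" using r s_def by simp
  define a where "a = Q powr r"
  define b where "b = P powr r"
  define c where "c = Q powr s"
  have c1: "c \<ge> 1" unfolding c_def using Q s by (simp add: ge_one_powr_ge_zero)
  have a_eq: "a = Q^2 * c"
    unfolding a_def c_def s_def using Q
    by (simp add: powr_diff powr_realpow)
  have b1: "b \<ge> (Q^2+1) powr r" unfolding b_def using P Q r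
    by (intro powr_mono2) auto
  have b2: "(Q^2+1) powr r = (Q^2+1)^2 * (Q^2+1) powr s"
    unfolding s_def using Q by (simp add: powr_diff powr_realpow)
  have b3: "(Q^2+1) powr s \<ge> c^2"
  proof -
    have "c^2 = (Q^2) powr s" unfolding c_def using Q
      by (simp add: sq_powr)
    also have "\<dots> \<le> (Q^2+1) powr s" using Q s by (intro powr_mono2) auto
    finally show ?thesis .
  qed
  have b4: "(Q^2+1)^2 * (Q^2+1) powr s \<ge> (Q^2+1)^2 * c^2"
    using b3 by (intro mult_left_mono) auto
  have bge: "b \<ge> (Q^2+1)^2 * c^2" using b1 b2 b4 by linarith
  have "a^2 + a < b"
  proof -
    have "Q^2 * c \<le> Q^2 * c^2" using c1 Q
      by (intro mult_left_mono) (auto simp: power2_eq_square)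
    moreover have "c^2 > 0" using c1 by simp
    moreover have "Q^2 * c^2 \<ge> 0" by simp
    moreover have "(Q^2+1)^2*c^2 = Q^2*Q^2*c^2 + 2*(Q^2*c^2) + c^2"
      by (simp add: power2_eq_square algebra_simps)
    moreover have "a^2+a = Q^2*Q^2*c^2 + Q^2*c"
      unfolding a_eq by (simp add: power2_eq_square algebra_simps)
    ultimately have "a^2 + a < (Q^2+1)^2 * c^2" by linarith
    thus ?thesis using bge by simp
  qed
  have apos: "a > 0" unfolding a_def using Q by simp
  have "0 \<le> Q^2" by simp
  hence Ppos: "P > 0" using P by linarith
  have bpos: "b > 0" unfolding b_def using Ppos by simp
  have e1: "P powr (-r) = 1/b" unfolding b_def by (simp add: powr_minus_divide)
  have e2: "(Q*P) powr (-r) = 1/(a*b)" unfolding a_def b_def using Q P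
    by (simp add: powr_mult powr_minus_divide)
  have e3: "(Q^2) powr (-r) = 1/a^2" unfolding a_def using Q
    by (simp add: powr_minus_divide sq_powr)
  have h: "a*(a^2+a) < a*b" using \<open>a^2 + a < b\<close> apos by (rule mult_strict_left_mono)
  have "1/b + 1/(a*b) < 1/a^2"
    using h \<open>a^2 + a < b\<close> apos bpos by (simp add: field_simps power2_eq_square)
  thus ?thesis using e1 e2 e3 by simp
qed

theorem mainTheorem7:
  fixes r :: real and p q :: nat
  assumes "r > 2.2" and "prime p" and "prime q" and "p > q^2"
  shows "sigma_neg r (q * p) < sigma_neg r (q^2)"
proof -
  have q2: "q \<ge> 2" using assms(3) prime_ge_2_nat by blast
  have "q \<le> q^2" by (simp add: power2_eq_square)
  hence pq: "p \<noteq> q" using assms(4) by simp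
  have p2: "p \<ge> 2" using assms(2) prime_ge_2_nat by blast
  have d1: "q * p \<noteq> q" "q * p \<noteq> p" "q * p \<noteq> 1" using q2 p2 by auto
  have d2: "q^2 \<noteq> q" "q^2 \<noteq> 1" using q2 by (auto simp: power2_eq_square)
  have L: "sigma_neg r (q * p) = 1 + real q powr (-r) + real p powr (-r) + (real q * real p) powr (-r)"
    unfolding sigma_neg_def div_qp[OF assms(2,3) pq] using q2 p2 pq d1
    by (simp add: insert_commute)
  have R: "sigma_neg r (q^2) = 1 + real q powr (-r) + (real q ^ 2) powr (-r)"
  proof -
    have n1: "1 \<noteq> q" using q2 by simp
    have n2: "1 \<noteq> q^2" using d2(2) by metis
    have "q \<notin> {q^2}" using d2(1) by simp
    have "1 \<notin> {q, q^2}" using n1 n2 by simp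
    hence "sigma_neg r (q^2) = 1 powr (-r) + real q powr (-r) + real (q^2) powr (-r)"
      unfolding sigma_neg_def div_q2[OF assms(3)] using \<open>q \<notin> {q^2}\<close> \<open>1 \<notin> {q, q^2}\<close> by (simp only: sum.insert finite.intros sum.empty finite_insert) simp
    thus ?thesis by simp
  qed
  have "real p \<ge> (real q)^2 + 1" using assms(4)
    by (metis Suc_leI of_nat_Suc of_nat_le_iff of_nat_power add.commute)
  moreover have "real q \<ge> 2" using q2 by simp
  moreover have "r > 2" using assms(1) by simp
  ultimately have "real p powr (-r) + (real q * real p) powr (-r) < (real q ^ 2) powr (-r)"
    by (intro key) auto
  thus ?thesis using L R by simp
qed

end
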